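(* Let $\{\epsilon(i)\}_{i\ge1}$ be a Rademacher sequence (independent, ${\bf P}(\epsilon(i)=1)={\bf P}(\epsilon(i)=-1)=1/2$), let $d\ge1$ be an integer, and set $$\xi_d(n)=\sum_{1\le i(1)<i(2)<\dots<i(d)\le n}\epsilon(i(1))\epsilon(i(2))\cdots\epsilon(i(d)).$$ Then $${\bf P}\Big(\limsup_{n\to\infty}\frac{\xi_d(n)}{\big(n\log\log(n+3)\big)^{d/2}}>0\Big)>0.$$ *)

theory Defs
  imports "HOL-Probability.Probability"
begin

definition xi :: "(nat \<Rightarrow> 'a \<Rightarrow> real) \<Rightarrow> nat \<Rightarrow> nat \<Rightarrow> 'a \<Rightarrow> real" where
  "xi eps d n \<omega> = (\<Sum>I\<in>{I. I \<subseteq> {1..n} \<and> card I = d}. \<Prod>i\<in>I. eps i \<omega>)"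

end

theory Submission
  imports Defs
begin


definition esym :: "(nat \<Rightarrow> real) \<Rightarrow> nat \<Rightarrow> nat \<Rightarrow> real" where
  "esym x d n = (\<Sum>I\<in>{I. I \<subseteq> {1..n} \<and> card I = d}. \<Prod>i\<in>I. x i)"

lemma fin_T: "finite {I. I \<subseteq> {1..(n::nat)} \<and> card I = d}"
  by (rule finite_subset[of _ "Pow {1..n}"]) auto

lemma esym_rec:
  assumes pm: "\<And>i. i \<in> {1..n} \<Longrightarrow> x i = 1 \<or> x i = -1"
  shows "(\<Sum>i\<in>{1..n}. x i) * esym x (Suc d) n
       = real (d+2) * esym x (d+2) n + (real n - real d) * esym x d n"
proof -
  define U where "U = {1..n}"
  define T where "T j = {I. I \<subseteq> U \<and> card I = j}" for j
  have finT: "finite (T j)" for j unfolding T_def U_def by (rule fin_T)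
  have finU: "finite U" unfolding U_def by simp
  have es: "esym x j n = (\<Sum>I\<in>T j. \<Prod>i\<in>I. x i)" for j unfolding esym_def T_def U_def by simp
  have a: "(\<Sum>J\<in>{J\<in>T (Suc d). i \<notin> J}. x i * (\<Prod>k\<in>J. x k)) = (\<Sum>I\<in>{I\<in>T (d+2). i \<in> I}. \<Prod>k\<in>I. x k)"
    if iU: "i \<in> U" for i
  proof (rule sum.reindex_bij_witness[where i = "\<lambda>I. I - {i}" and j = "\<lambda>J. insert i J"])
    fix I assume "I \<in> {I\<in>T (d+2). i \<in> I}"
    then have I: "I \<subseteq> U" "card I = d+2" "i \<in> I" unfolding T_def by auto
    have fI: "finite I" using I(1) finU finite_subset by blast
    show "insert i (I - {i}) = I" using I by auto
    show "I - {i} \<in> {J\<in>T (Suc d). i \<notin> J}" using I fI unfolding T_def by auto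
  next
    fix J assume "J \<in> {J\<in>T (Suc d). i \<notin> J}"
    then have J: "J \<subseteq> U" "card J = Suc d" "i \<notin> J" unfolding T_def by auto
    have fJ: "finite J" using J(1) finU finite_subset by blast
    show "insert i J - {i} = J" using J by auto
    show "insert i J \<in> {I\<in>T (d+2). i \<in> I}" using J fJ iU unfolding T_def by auto
    show "(\<Prod>k\<in>insert i J. x k) = x i * (\<Prod>k\<in>J. x k)" using fJ J by simp
  qed
  have b: "(\<Sum>J\<in>{J\<in>T (Suc d). i \<in> J}. x i * (\<Prod>k\<in>J. x k)) = (\<Sum>K\<in>{K\<in>T d. i \<notin> K}. \<Prod>k\<in>K. x k)"
    if iU: "i \<in> U" for i
  proof (rule sum.reindex_bij_witness[where j = "\<lambda>J. J - {i}" and i = "\<lambda>K. insert i K"])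
    fix J assume "J \<in> {J\<in>T (Suc d). i \<in> J}"
    then have J: "J \<subseteq> U" "card J = Suc d" "i \<in> J" unfolding T_def by auto
    have fJ: "finite J" using J(1) finU finite_subset by blast
    show "insert i (J - {i}) = J" using J by auto
    show "J - {i} \<in> {K\<in>T d. i \<notin> K}" using J fJ unfolding T_def by auto
    have "x i * x i = 1" using pm[of i] iU unfolding U_def by auto
    moreover have "(\<Prod>k\<in>J. x k) = x i * (\<Prod>k\<in>J - {i}. x k)" using fJ J by (simp add: prod.remove)
    ultimately show "(\<Prod>k\<in>J - {i}. x k) = x i * (\<Prod>k\<in>J. x k)" by (simp add: mult.assoc[symmetric])
  next
    fix K assume "K \<in> {K\<in>T d. i \<notin> K}"
    then have K: "K \<subseteq> U" "card K = d" "i \<notin> K" unfolding T_def by auto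
    have fK: "finite K" using K(1) finU finite_subset by blast
    show "insert i K - {i} = K" using K by auto
    show "insert i K \<in> {J\<in>T (Suc d). i \<in> J}" using K fK iU unfolding T_def by auto
  qed
  have split: "(\<Sum>J\<in>T (Suc d). x i * (\<Prod>k\<in>J. x k)) =
      (\<Sum>J\<in>{J\<in>T (Suc d). i \<notin> J}. x i * (\<Prod>k\<in>J. x k)) + (\<Sum>J\<in>{J\<in>T (Suc d). i \<in> J}. x i * (\<Prod>k\<in>J. x k))" for i
    using finT by (simp add: sum.inter_filter sum.distrib[symmetric] if_distrib[symmetric]) (intro sum.cong; auto)
  have "(\<Sum>i\<in>U. x i) * esym x (Suc d) n = (\<Sum>i\<in>U. \<Sum>J\<in>T (Suc d). x i * (\<Prod>k\<in>J. x k))"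
    by (simp add: es sum_distrib_left sum_distrib_right sum.swap[of _ U])
  also have "\<dots> = (\<Sum>i\<in>U. (\<Sum>I\<in>{I\<in>T (d+2). i \<in> I}. \<Prod>k\<in>I. x k) + (\<Sum>K\<in>{K\<in>T d. i \<notin> K}. \<Prod>k\<in>K. x k))"
    by (intro sum.cong refl) (simp add: split a b)
  also have "\<dots> = (\<Sum>i\<in>U. \<Sum>I\<in>{I\<in>T (d+2). i \<in> I}. \<Prod>k\<in>I. x k) + (\<Sum>i\<in>U. \<Sum>K\<in>{K\<in>T d. i \<notin> K}. \<Prod>k\<in>K. x k)"
    by (simp add: sum.distrib)
  also have "(\<Sum>i\<in>U. \<Sum>I\<in>{I\<in>T (d+2). i \<in> I}. \<Prod>k\<in>I. x k) = (\<Sum>I\<in>T (d+2). \<Sum>i\<in>{i\<in>U. i \<in> I}. \<Prod>k\<in>I. x k)"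
    using sum.swap_restrict[OF finU finT, of "\<lambda>i I. \<Prod>k\<in>I. x k" "d+2" "\<lambda>i I. i \<in> I"] by simp
  also have "\<dots> = (\<Sum>I\<in>T (d+2). real (d+2) * (\<Prod>k\<in>I. x k))"
  proof (intro sum.cong refl)
    fix I assume "I \<in> T (d+2)"
    then have "{i\<in>U. i \<in> I} = I" "card I = d+2" unfolding T_def by auto
    then show "(\<Sum>i\<in>{i\<in>U. i \<in> I}. \<Prod>k\<in>I. x k) = real (d+2) * (\<Prod>k\<in>I. x k)" by simp
  qed
  also have "(\<Sum>i\<in>U. \<Sum>K\<in>{K\<in>T d. i \<notin> K}. \<Prod>k\<in>K. x k) = (\<Sum>K\<in>T d. \<Sum>i\<in>{i\<in>U. i \<notin> K}. \<Prod>k\<in>K. x k)"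
    using sum.swap_restrict[OF finU finT, of "\<lambda>i K. \<Prod>k\<in>K. x k" "d" "\<lambda>i K. i \<notin> K"] by simp
  also have "\<dots> = (\<Sum>K\<in>T d. (real n - real d) * (\<Prod>k\<in>K. x k))"
  proof (intro sum.cong refl)
    fix K assume "K \<in> T d"
    then have K: "K \<subseteq> U" "card K = d" unfolding T_def by auto
    have fK: "finite K" using K(1) finU finite_subset by blast
    have "{i\<in>U. i \<notin> K} = U - K" by auto
    then have "card {i\<in>U. i \<notin> K} = n - d" using K fK finU by (simp add: card_Diff_subset U_def)
    moreover have "d \<le> n" using K card_mono[OF finU K(1)] by (simp add: U_def)
    ultimately show "(\<Sum>i\<in>{i\<in>U. i \<notin> K}. \<Prod>k\<in>K. x k) = (real n - real d) * (\<Prod>k\<in>K. x k)" by simp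
  qed
  finally show ?thesis by (simp add: es U_def sum_distrib_left)
qed


fun hp :: "nat \<Rightarrow> real \<Rightarrow> real \<Rightarrow> real" where
  "hp 0 n S = 1"
| "hp (Suc 0) n S = S"
| "hp (Suc (Suc d)) n S = (S * hp (Suc d) n S - (n - real d) * hp d n S) / real (d+2)"

lemma two_induct[case_names 0 1 2]:
  assumes "P 0" "P (Suc 0)" "\<And>d. P d \<Longrightarrow> P (Suc d) \<Longrightarrow> P (Suc (Suc d))"
  shows "P n"
proof -
  have "P n \<and> P (Suc n)" by (induction n) (use assms in auto)
  then show ?thesis by simp
qed

lemma esym0: "esym x 0 n = 1"
proof -
  have "{I. I \<subseteq> {1..n} \<and> card I = 0} = {{}}"
    using finite_subset[of _ "{1..n}"] by (auto simp: card_eq_0_iff)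
  then show ?thesis unfolding esym_def by simp
qed

lemma esym1: "esym x 1 n = (\<Sum>i\<in>{1..n}. x i)"
proof -
  have "esym x 1 n = (\<Sum>I\<in>(\<lambda>i. {i}) ` {1..n}. \<Prod>i\<in>I. x i)"
  proof -
    have "{I. I \<subseteq> {1..n} \<and> card I = 1} = (\<lambda>i. {i}) ` {1..n}"
      by (auto simp: card_Suc_eq)
    then show ?thesis unfolding esym_def by simp
  qed
  also have "\<dots> = (\<Sum>i\<in>{1..n}. x i)" by (subst sum.reindex) (auto simp: inj_on_def)
  finally show ?thesis .
qed

lemma esym_hp:
  assumes pm: "\<And>i. i \<in> {1..n} \<Longrightarrow> x i = 1 \<or> x i = -1"
  shows "esym x d n = hp d (real n) (\<Sum>i\<in>{1..n}. x i)"
proof (induction d rule: two_induct)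
  case 0 then show ?case by (simp add: esym0)
next
  case 1 then show ?case using esym1[of x n] by simp
next
  case (2 d)
  have r: "(\<Sum>i\<in>{1..n}. x i) * esym x (Suc d) n
       = real (d+2) * esym x (d+2) n + (real n - real d) * esym x d n"
    by (rule esym_rec[OF pm])
  show ?case using r 2 by (simp add: divide_simps algebra_simps)
qed

lemma hp_err:
  "\<exists>C\<ge>0. \<forall>n S. 1 \<le> n \<longrightarrow> n \<le> S^2 \<longrightarrow> 1 \<le> S \<longrightarrow>
      \<bar>fact d * hp d n S - S^d\<bar> \<le> C * n * S^d / S^2"
proof (induction d rule: two_induct)
  case 0 then show ?case by (intro exI[of _ 0]) simp
next
  case 1 then show ?case by (intro exI[of _ 0]) simp
next
  case (2 d)
  obtain C0 where C0: "C0 \<ge> 0" "\<And>n S. 1 \<le> n \<Longrightarrow> n \<le> S^2 \<Longrightarrow> 1 \<le> S \<Longrightarrow>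
      \<bar>fact d * hp d n S - S^d\<bar> \<le> C0 * n * S^d / S^2" using 2(1) by blast
  obtain C1 where C1: "C1 \<ge> 0" "\<And>n S. 1 \<le> n \<Longrightarrow> n \<le> S^2 \<Longrightarrow> 1 \<le> S \<Longrightarrow>
      \<bar>fact (Suc d) * hp (Suc d) n S - S^(Suc d)\<bar> \<le> C1 * n * S^(Suc d) / S^2" using 2(2) by blast
  define C where "C = C1 + (real d+1)^2 * (1 + C0)"
  show ?case
  proof (intro exI[of _ C] conjI allI impI)
    show "C \<ge> 0" using C0 C1 by (simp add: C_def)
    fix n S :: real assume n1: "1 \<le> n" and nS: "n \<le> S^2" and S1: "1 \<le> S"
    define E0 where "E0 = fact d * hp d n S - S^d"
    define E1 where "E1 = fact (Suc d) * hp (Suc d) n S - S^(Suc d)"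
    have e0: "\<bar>E0\<bar> \<le> C0 * n * S^d / S^2" using C0(2)[OF n1 nS S1] by (simp add: E0_def)
    have e1: "\<bar>E1\<bar> \<le> C1 * n * S^(Suc d) / S^2" using C1(2)[OF n1 nS S1] by (simp add: E1_def)
    have Spos: "S > 0" using S1 by simp
    have f2: "(fact (Suc (Suc d)) :: real) = real (d+2) * fact (Suc d)" by (simp only: fact_Suc) simp
    have f1: "(fact (Suc d)::real) = (real d + 1) * fact d" by simp
    have hh: "fact (Suc (Suc d)) * hp (Suc (Suc d)) n S = fact (Suc d) * (S * hp (Suc d) n S - (n - real d) * hp d n S)"
      by (simp only: f2 hp.simps) simp
    have key: "fact (Suc (Suc d)) * hp (Suc (Suc d)) n S - S^(Suc (Suc d))
        = S * E1 - (n - real d) * (real d + 1) * (S^d + E0)"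
      unfolding hh E0_def E1_def f1 by (simp add: algebra_simps)
    have t1: "\<bar>S * E1\<bar> \<le> C1 * n * S^d"
    proof -
      have "\<bar>S * E1\<bar> = S * \<bar>E1\<bar>" using Spos by (simp add: abs_mult)
      also have "\<dots> \<le> S * (C1 * n * S^(Suc d) / S^2)" using e1 Spos by (intro mult_left_mono) auto
      also have "\<dots> = C1 * n * S^d" using Spos by (simp add: power2_eq_square field_simps)
      finally show ?thesis .
    qed
    have e0': "\<bar>E0\<bar> \<le> C0 * S^d"
    proof -
      have "C0 * n * S^d / S^2 \<le> C0 * S^2 * S^d / S^2"
        using C0(1) nS Spos by (intro divide_right_mono mult_right_mono mult_left_mono) auto
      also have "\<dots> = C0 * S^d" using Spos by simp
      finally show ?thesis using e0 by simp
    qed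
    have t2: "\<bar>(n - real d) * (real d + 1) * (S^d + E0)\<bar> \<le> (real d+1)^2 * (1 + C0) * n * S^d"
    proof -
      have "real d * 1 \<le> real d * n" using n1 by (intro mult_left_mono) auto
      then have a: "\<bar>n - real d\<bar> \<le> (real d + 1) * n" using n1 by (simp add: abs_le_iff algebra_simps)
      have "S^d > 0" using Spos by simp
      then have b: "\<bar>S^d + E0\<bar> \<le> (1 + C0) * S^d" using e0' unfolding abs_le_iff by (simp add: algebra_simps)
      have "\<bar>(n - real d) * (real d + 1) * (S^d + E0)\<bar> = \<bar>n - real d\<bar> * (real d + 1) * \<bar>S^d + E0\<bar>"
        by (simp add: abs_mult)
      also have "\<dots> \<le> ((real d + 1) * n) * (real d + 1) * ((1 + C0) * S^d)"
        using a b by (intro mult_mono) auto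
      also have "\<dots> = (real d+1)^2 * (1 + C0) * n * S^d" by (simp add: power2_eq_square algebra_simps)
      finally show ?thesis .
    qed
    have "\<bar>fact (Suc (Suc d)) * hp (Suc (Suc d)) n S - S^(Suc (Suc d))\<bar> \<le> C * n * S^d"
      unfolding key
    proof -
      have "\<bar>S * E1 - (n - real d) * (real d + 1) * (S^d + E0)\<bar> \<le> \<bar>S * E1\<bar> + \<bar>(n - real d) * (real d + 1) * (S^d + E0)\<bar>"
        by (rule abs_triangle_ineq4)
      also have "\<dots> \<le> C1 * n * S^d + (real d+1)^2 * (1 + C0) * n * S^d" using t1 t2 by linarith
      also have "\<dots> = C * n * S^d" by (simp add: C_def algebra_simps)
      finally show "\<bar>S * E1 - (n - real d) * (real d + 1) * (S^d + E0)\<bar> \<le> C * n * S^d" .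
    qed
    also have "C * n * S^d = C * n * S^(Suc (Suc d)) / S^2" using Spos by (simp add: power2_eq_square)
    finally show "\<bar>fact (Suc (Suc d)) * hp (Suc (Suc d)) n S - S^(Suc (Suc d))\<bar> \<le> C * n * S^(Suc (Suc d)) / S^2" .
  qed
qed

lemma hp_lower:
  "\<exists>A\<ge>1. \<forall>n S. 1 \<le> n \<longrightarrow> A * n \<le> S^2 \<longrightarrow> 1 \<le> S \<longrightarrow> fact d * hp d n S \<ge> S^d / 2"
proof -
  obtain C where C: "C \<ge> 0" "\<And>n S. 1 \<le> n \<Longrightarrow> n \<le> S^2 \<Longrightarrow> 1 \<le> S \<Longrightarrow>
      \<bar>fact d * hp d n S - S^d\<bar> \<le> C * n * S^d / S^2" using hp_err[of d] by blast
  show ?thesis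
  proof (intro exI[of _ "1 + 2*C"] conjI allI impI)
    show "1 \<le> 1 + 2*C" using C by simp
    fix n S :: real assume n1: "1 \<le> n" and AS: "(1 + 2*C) * n \<le> S^2" and S1: "1 \<le> S"
    have "n \<le> (1 + 2*C) * n" using C n1 by (simp add: algebra_simps)
    then have nS: "n \<le> S^2" using AS by linarith
    have Spos: "S > 0" using S1 by simp
    have "C * n * S^d / S^2 \<le> S^d / 2"
    proof -
      have "2 * C * n \<le> S^2" using AS n1 by (simp add: algebra_simps)
      then have "C * n * S^d * 2 \<le> S^2 * S^d" using Spos by (simp add: mult_right_mono algebra_simps)
      then show ?thesis using Spos by (simp add: field_simps)
    qed
    then show "fact d * hp d n S \<ge> S^d / 2" using C(2)[OF n1 nS S1] unfolding abs_le_iff by linarith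
  qed
qed


lemma central_sq: "m \<ge> 1 \<Longrightarrow> 16^m \<le> 4 * m * ((2*m) choose m)^2"
proof (induction m rule: dec_induct)
  case base then show ?case by (simp add: numeral_2_eq_2)
next
  case (step m)
  define c where "c = (2*m) choose m"
  define c' where "c' = (2*Suc m) choose (Suc m)"
  have e1: "Suc m * ((2*m+1) choose m) = (2*m+1) * c"
    using binomial_absorb_comp[of "2*m+1" m] by (simp add: c_def)
  have e2: "Suc m * c' = Suc (2*m+1) * ((2*m+1) choose m)"
  proof -
    have "2*Suc m = Suc (2*m+1)" by simp
    then show ?thesis unfolding c'_def by (simp only: Suc_times_binomial)
  qed
  have e3: "Suc m * c' = 2 * (2*m+1) * c"
  proof -
    have "Suc m * (Suc m * c') = Suc m * (Suc (2*m+1) * ((2*m+1) choose m))" using e2 by simp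
    also have "\<dots> = 2 * (Suc m * ((2*m+1) choose m)) * Suc m" by (simp add: algebra_simps)
    also have "\<dots> = 2 * ((2*m+1) * c) * Suc m" using e1 by simp
    also have "\<dots> = Suc m * (2 * (2*m+1) * c)" by (simp add: algebra_simps)
    finally show ?thesis by (simp only: mult_cancel1) simp
  qed
  have "Suc m * (4 * Suc m * c'^2) = 4 * (Suc m * c')^2" by (simp add: power2_eq_square algebra_simps)
  also have "\<dots> = 4 * (2 * (2*m+1) * c)^2" by (simp only: e3)
  also have "\<dots> = 16 * (2*m+1)^2 * c^2" by (simp add: power2_eq_square algebra_simps)
  also have "\<dots> \<ge> 16 * (Suc m * (4*m)) * c^2"
    by (intro mult_right_mono mult_left_mono) (auto simp: power2_eq_square algebra_simps)
  finally have "Suc m * (16 * (4*m*c^2)) \<le> Suc m * (4 * Suc m * c'^2)" by (simp add: algebra_simps)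
  then have "16 * (4*m*c^2) \<le> 4 * Suc m * c'^2" by (simp only: Suc_mult_le_cancel1)
  moreover have "16^Suc m \<le> 16 * (4*m*c^2)" using step.IH by (simp add: c_def)
  ultimately show ?case by (simp add: c'_def)
qed

lemma central_lower: assumes "m \<ge> 1" shows "4^m / (2 * sqrt m) \<le> real ((2*m) choose m)"
proof -
  define c where "c = real ((2*m) choose m)"
  have "(16::real)^m \<le> 4 * m * c^2" unfolding c_def using central_sq[OF assms] by (metis of_nat_le_iff of_nat_mult of_nat_numeral of_nat_power)
  have m: "sqrt m > 0" using assms by simp
  have p4: "((4::real)^m)^2 = 16^m" by (simp add: power2_eq_square power_mult_distrib[symmetric])
  have "(4^m / (2 * sqrt m))^2 = ((4::real)^m)^2 / (4*m)" using assms
    by (simp add: power_divide power_mult_distrib)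
  also have "\<dots> = 16^m / (4*m)" by (simp only: p4)
  also have "\<dots> \<le> c^2" using \<open>16^m \<le> 4*m*c^2\<close> assms by (simp add: divide_le_eq algebra_simps)
  finally have "(4^m / (2 * sqrt m))^2 \<le> c^2" .
  then have "4^m / (2 * sqrt m) \<le> c" by (rule power2_le_imp_le) (simp add: c_def)
  then show ?thesis by (simp add: c_def)
qed

lemma binom_ratio:
  assumes "m \<ge> 1" "j \<le> m"
  shows "real ((2*m) choose m) * ((real m - j) / (real m + j))^j \<le> real ((2*m) choose (m+j))"
  using assms(2)
proof (induction j)
  case 0 then show ?case by simp
next
  case (Suc j)
  have rec: "real (Suc (m+j)) * real ((2*m) choose (m + Suc j)) = (real m - j) * real ((2*m) choose (m+j))"
  proof -
    have "Suc (m+j) * ((2*m) choose Suc (m+j)) = 2*m * ((2*m - 1) choose (m+j))" by (rule binomial_absorption)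
    also have "\<dots> = (2*m - (m+j)) * ((2*m) choose (m+j))" by (rule binomial_absorb_comp[symmetric])
    finally have "Suc (m+j) * ((2*m) choose (m + Suc j)) = (m - j) * ((2*m) choose (m+j))" by simp
    then have "real (Suc (m+j) * ((2*m) choose (m + Suc j))) = real ((m - j) * ((2*m) choose (m+j)))" by metis
    then show ?thesis using Suc.prems by (simp add: of_nat_diff) (simp add: algebra_simps)
  qed
  have pos: "real m + j > 0" using assms by simp
  define a where "a = (real m - j) / (real m + j)"
  define b where "b = (real m - Suc j) / (real m + Suc j)"
  have b0: "b \<ge> 0" unfolding b_def using Suc.prems by simp
  have ba: "b \<le> a" unfolding a_def b_def using Suc.prems pos by (simp add: divide_simps) (simp add: algebra_simps)
  have "real ((2*m) choose m) * b^Suc j = real ((2*m) choose m) * b^j * b" by simp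
  also have "\<dots> \<le> real ((2*m) choose m) * a^j * b"
    using b0 ba by (intro mult_right_mono mult_left_mono power_mono) auto
  also have "\<dots> \<le> real ((2*m) choose (m+j)) * b"
    using Suc.IH Suc.prems b0 a_def by (intro mult_right_mono) auto
  also have "\<dots> \<le> real ((2*m) choose (m+j)) * ((real m - j) / (real m + Suc j))"
    unfolding b_def using Suc.prems by (intro mult_left_mono divide_right_mono) auto
  also have "\<dots> = real ((2*m) choose (m + Suc j))" using rec by (simp add: field_simps)
  finally show ?case by (simp add: b_def)
qed

lemma one_minus_exp: fixes z :: real assumes "0 \<le> z" "z \<le> 1/2" shows "exp (-2*z) \<le> 1 - z"
proof -
  have "1 + 2*z \<le> exp (2*z)" using exp_ge_add_one_self[of "2*z"] by simp
  then have "exp (-2*z) \<le> 1 / (1 + 2*z)" using assms by (simp add: exp_minus field_simps)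
  also have "\<dots> \<le> 1 - z"
  proof -
    have "z * (2*z) \<le> z * 1" using assms by (intro mult_left_mono) auto
    then show ?thesis using assms by (simp add: divide_simps) (simp add: algebra_simps power2_eq_square)
  qed
  finally show ?thesis .
qed

lemma binom_tail:
  assumes m1: "m \<ge> 1" and r2: "real m \<le> real r ^ 2" and r8: "8 * r \<le> m"
  shows "4^m * exp (-16 * real r^2 / real m) / 2 \<le> real (\<Sum>j\<in>{r..2*r}. (2*m) choose (m+j))"
proof -
  have mpos: "real m > 0" using m1 by simp
  define x where "x = exp (-16 * real r^2 / real m)"
  define z where "z = 2 * real r / real m"
  have z0: "0 \<le> z" "2*z \<le> 1/2" using r8 mpos unfolding z_def by (auto simp: field_simps)
  have base: "exp (-4*z) \<le> (real m - 2*r) / (real m + 2*r)"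
  proof -
    have "exp (-4*z) \<le> 1 - 2*z" using one_minus_exp[of "2*z"] z0 by simp
    also have "\<dots> \<le> (1 - z) / (1 + z)" using z0 by (simp add: divide_simps) (simp add: algebra_simps power2_eq_square)
    also have "\<dots> = (real m - 2*r) / (real m + 2*r)" unfolding z_def using mpos by (simp add: divide_simps)
    finally show ?thesis .
  qed
  have each: "real ((2*m) choose m) * x \<le> real ((2*m) choose (m+j))" if j: "j \<in> {r..2*r}" for j
  proof -
    have jm: "j \<le> m" using j r8 by auto
    have q0: "0 \<le> (real m - 2*r) / (real m + 2*r)" using r8 by auto
    have q1: "(real m - 2*r) / (real m + 2*r) \<le> 1" using mpos by (simp add: divide_simps)
    have "x = exp (-4*z) ^ (2*r)" unfolding x_def z_def using mpos
      by (simp add: exp_of_nat_mult[symmetric] power2_eq_square field_simps)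
    also have "\<dots> \<le> ((real m - 2*r) / (real m + 2*r)) ^ (2*r)" using base by (intro power_mono) auto
    also have "\<dots> \<le> ((real m - 2*r) / (real m + 2*r)) ^ j" using j q0 q1 by (intro power_decreasing) auto
    also have "\<dots> \<le> ((real m - j) / (real m + j)) ^ j"
      using j r8 mpos by (intro power_mono) (auto simp: divide_simps algebra_simps)
    finally have "x \<le> ((real m - j) / (real m + j)) ^ j" .
    then have "real ((2*m) choose m) * x \<le> real ((2*m) choose m) * ((real m - j) / (real m + j)) ^ j"
      by (intro mult_left_mono) auto
    also have "\<dots> \<le> real ((2*m) choose (m+j))" by (rule binom_ratio[OF m1 jm])
    finally show ?thesis .
  qed
  have "real (r+1) * (real ((2*m) choose m) * x) \<le> (\<Sum>j\<in>{r..2*r}. real ((2*m) choose (m+j)))"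
    using sum_mono[of "{r..2*r}" "\<lambda>j. real ((2*m) choose m) * x", OF each] by simp
  moreover have "4^m * x / 2 \<le> real (r+1) * (real ((2*m) choose m) * x)"
  proof -
    have sq: "sqrt m \<le> real r + 1" using r2 by (smt (verit) real_sqrt_le_mono real_sqrt_abs power2_eq_square of_nat_0_le_iff real_sqrt_pow2 sqrt_le_D)
    have x0: "x \<ge> 0" unfolding x_def by simp
    have "4^m * x / 2 = (real r + 1) * (4^m / (2 * (real r + 1))) * x" by (simp add: field_simps)
    also have "\<dots> \<le> (real r + 1) * (4^m / (2 * sqrt m)) * x"
      using sq m1 x0 by (intro mult_right_mono mult_left_mono divide_left_mono) auto
    also have "\<dots> \<le> (real r + 1) * real ((2*m) choose m) * x"
      using central_lower[OF m1] x0 by (intro mult_right_mono mult_left_mono) auto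
    finally show ?thesis by (simp add: algebra_simps)
  qed
  ultimately have "4^m * x / 2 \<le> (\<Sum>j\<in>{r..2*r}. real ((2*m) choose (m+j)))" by linarith
  then show ?thesis unfolding x_def by (simp add: of_nat_sum)
qed


lemma pat_count:
  fixes F :: "nat set"
  assumes fin: "finite F" and cF: "card F = 2*m" and rm: "2*r \<le> m"
  shows "(\<Sum>j\<in>{r..2*r}. (2*m) choose (m+j)) \<le> card {s \<in> PiE F (\<lambda>_. {-1,1::real}). (\<Sum>i\<in>F. s i) \<ge> 2 * real r}"
proof -
  define g where "g P = (\<lambda>i\<in>F. if i \<in> P then (1::real) else -1)" for P
  define U where "U = (\<Union>j\<in>{r..2*r}. {P. P \<subseteq> F \<and> card P = m+j})"
  have finP: "finite (PiE F (\<lambda>_. {-1,1::real}))" using fin by (simp add: finite_PiE)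
  have cardU: "card U = (\<Sum>j\<in>{r..2*r}. (2*m) choose (m+j))"
  proof -
    have "card U = (\<Sum>j\<in>{r..2*r}. card {P. P \<subseteq> F \<and> card P = m+j})"
      unfolding U_def
      by (rule card_UN_disjoint) (auto intro: finite_subset[OF _ finite_Pow_iff[THEN iffD2, OF fin]])
    also have "\<dots> = (\<Sum>j\<in>{r..2*r}. (2*m) choose (m+j))" using n_subsets[OF fin] cF by simp
    finally show ?thesis .
  qed
  have sumg: "(\<Sum>i\<in>F. g P i) = 2 * real (card P) - real (card F)" if "P \<subseteq> F" for P
  proof -
    have "(\<Sum>i\<in>F. g P i) = (\<Sum>i\<in>F. if i \<in> P then (1::real) else -1)" unfolding g_def by simp
    also have "\<dots> = real (card (F \<inter> {i. i\<in>P})) - real (card (F \<inter> - {i. i \<in> P}))"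
      using sum.If_cases[OF fin, of "\<lambda>i. i \<in> P" "\<lambda>_. 1::real" "\<lambda>_. -1"] by simp
    also have "F \<inter> {i. i\<in>P} = P" using that by auto
    also have "F \<inter> - {i. i \<in> P} = F - P" by auto
    also have "real (card (F - P)) = real (card F) - real (card P)"
      using that fin by (simp add: card_Diff_subset finite_subset of_nat_diff card_mono)
    finally show ?thesis by simp
  qed
  have inj: "inj_on g U"
  proof (rule inj_onI)
    fix P P' assume "P \<in> U" "P' \<in> U" and e: "g P = g P'"
    then have s: "P \<subseteq> F" "P' \<subseteq> F" unfolding U_def by auto
    show "P = P'"
    proof (rule set_eqI)
      fix i show "i \<in> P \<longleftrightarrow> i \<in> P'"
      proof (cases "i \<in> F")
        case True then show ?thesis using fun_cong[OF e, of i] by (auto simp: g_def split: if_splits)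
      next
        case False then show ?thesis using s by auto
      qed
    qed
  qed
  have sub: "g ` U \<subseteq> {s \<in> PiE F (\<lambda>_. {-1,1::real}). (\<Sum>i\<in>F. s i) \<ge> 2 * real r}"
  proof
    fix s assume "s \<in> g ` U"
    then obtain P j where P: "P \<subseteq> F" "card P = m + j" "j \<in> {r..2*r}" "s = g P" unfolding U_def by auto
    have "s \<in> PiE F (\<lambda>_. {-1,1::real})" unfolding P(4) g_def by auto
    moreover have "(\<Sum>i\<in>F. s i) \<ge> 2 * real r" using sumg[OF P(1)] P cF by simp
    ultimately show "s \<in> {s \<in> PiE F (\<lambda>_. {-1,1::real}). (\<Sum>i\<in>F. s i) \<ge> 2 * real r}" by simp
  qed
  have "card U = card (g ` U)" using card_image[OF inj] by simp
  also have "\<dots> \<le> card {s \<in> PiE F (\<lambda>_. {-1,1::real}). (\<Sum>i\<in>F. s i) \<ge> 2 * real r}"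
    by (rule card_mono[OF _ sub]) (use finP in auto)
  finally show ?thesis using cardU by simp
qed

locale rad = prob_space M for M :: "'a measure" +
  fixes eps :: "nat \<Rightarrow> 'a \<Rightarrow> real"
  assumes ind: "indep_vars (\<lambda>_. borel) eps {1..}"
    and p1: "\<And>i. i \<ge> 1 \<Longrightarrow> prob {\<omega> \<in> space M. eps i \<omega> = 1} = 1/2"
    and pm: "\<And>i. i \<ge> 1 \<Longrightarrow> prob {\<omega> \<in> space M. eps i \<omega> = -1} = 1/2"
begin

lemma meas_eps[measurable]: "i \<ge> 1 \<Longrightarrow> eps i \<in> borel_measurable M"
  using ind unfolding indep_vars_def by auto

lemma count:
  assumes fin: "finite F" and ne: "F \<noteq> {}" and F1: "F \<subseteq> {1..}"
  shows "prob {\<omega>\<in>space M. (\<forall>i\<in>F. eps i \<omega> \<in> {-1,1}) \<and> Q (restrict (\<lambda>i. eps i \<omega>) F)}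
       = real (card {s \<in> PiE F (\<lambda>_. {-1,1::real}). Q s}) / 2^card F"
proof -
  define P where "P = {s \<in> PiE F (\<lambda>_. {-1,1::real}). Q s}"
  define C where "C s = (\<Inter>i\<in>F. eps i -` {s i} \<inter> space M)" for s
  have finP: "finite P" unfolding P_def using fin by (simp add: finite_PiE)
  have setq: "{\<omega>\<in>space M. (\<forall>i\<in>F. eps i \<omega> \<in> {-1,1}) \<and> Q (restrict (\<lambda>i. eps i \<omega>) F)} = (\<Union>s\<in>P. C s)"
  proof (rule set_eqI)
    fix \<omega> show "\<omega> \<in> {\<omega>\<in>space M. (\<forall>i\<in>F. eps i \<omega> \<in> {-1,1}) \<and> Q (restrict (\<lambda>i. eps i \<omega>) F)} \<longleftrightarrow> \<omega> \<in> (\<Union>s\<in>P. C s)"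
    proof
      assume a: "\<omega> \<in> {\<omega>\<in>space M. (\<forall>i\<in>F. eps i \<omega> \<in> {-1,1}) \<and> Q (restrict (\<lambda>i. eps i \<omega>) F)}"
      then have "restrict (\<lambda>i. eps i \<omega>) F \<in> P" unfolding P_def by auto
      moreover have "\<omega> \<in> C (restrict (\<lambda>i. eps i \<omega>) F)" using a ne unfolding C_def by auto
      ultimately show "\<omega> \<in> (\<Union>s\<in>P. C s)" by blast
    next
      assume "\<omega> \<in> (\<Union>s\<in>P. C s)"
      then obtain s where s: "s \<in> P" "\<omega> \<in> C s" by blast
      then have e: "\<And>i. i \<in> F \<Longrightarrow> eps i \<omega> = s i" "\<omega> \<in> space M" unfolding C_def using ne by auto
      have "restrict (\<lambda>i. eps i \<omega>) F = s" using s(1) e unfolding P_def by (auto simp: PiE_def extensional_def)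
      then show "\<omega> \<in> {\<omega>\<in>space M. (\<forall>i\<in>F. eps i \<omega> \<in> {-1,1}) \<and> Q (restrict (\<lambda>i. eps i \<omega>) F)}"
        using s(1) e unfolding P_def by (auto simp: PiE_def Pi_def)
    qed
  qed
  have Cev: "C s \<in> events" for s
    unfolding C_def using fin ne F1 by (intro sets.finite_INT) (auto intro!: measurable_sets[OF meas_eps])
  have probC: "prob (C s) = (1/2)^card F" if "s \<in> P" for s
  proof -
    have sv: "\<And>i. i \<in> F \<Longrightarrow> s i = 1 \<or> s i = -1" using that unfolding P_def by auto
    have "prob (C s) = (\<Prod>i\<in>F. prob (eps i -` {s i} \<inter> space M))"
      unfolding C_def by (rule indep_varsD[OF ind ne fin F1]) simp
    also have "\<dots> = (\<Prod>i\<in>F. 1/2)"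
    proof (rule prod.cong[OF refl])
      fix i assume i: "i \<in> F"
      then have i1: "i \<ge> 1" using F1 by auto
      have "eps i -` {s i} \<inter> space M = {\<omega>\<in>space M. eps i \<omega> = s i}" by auto
      then show "prob (eps i -` {s i} \<inter> space M) = 1/2" using sv[OF i] p1[OF i1] pm[OF i1] by auto
    qed
    finally show ?thesis by simp
  qed
  have disj: "disjoint_family_on C P"
  proof (unfold disjoint_family_on_def, intro ballI impI)
    fix s s' assume s: "s \<in> P" "s' \<in> P" "s \<noteq> s'"
    then obtain i where i: "i \<in> F" "s i \<noteq> s' i" unfolding P_def by (auto simp: PiE_def extensional_def fun_eq_iff) (metis)
    show "C s \<inter> C s' = {}" unfolding C_def using i by auto
  qed
  have "prob (\<Union>s\<in>P. C s) = (\<Sum>s\<in>P. prob (C s))"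
    by (rule measure_finite_Union[OF finP]) (use Cev disj in \<open>auto simp: emeasure_eq_measure\<close>)
  also have "\<dots> = real (card P) * (1/2)^card F" using probC by simp
  finally show ?thesis unfolding setq P_def by (simp add: power_one_over divide_simps)
qed

lemma count_ev:
  assumes fin: "finite F" and F1: "F \<subseteq> {1..}"
  shows "{\<omega>\<in>space M. (\<forall>i\<in>F. eps i \<omega> \<in> {-1,1}) \<and> Q (restrict (\<lambda>i. eps i \<omega>) F)} \<in> events"
proof -
  define P where "P = {s \<in> PiE F (\<lambda>_. {-1,1::real}). Q s}"
  define C where "C s = {\<omega>\<in>space M. \<forall>i\<in>F. eps i \<omega> = s i}" for s
  have finP: "finite P" unfolding P_def using fin by (simp add: finite_PiE)
  have setq: "{\<omega>\<in>space M. (\<forall>i\<in>F. eps i \<omega> \<in> {-1,1}) \<and> Q (restrict (\<lambda>i. eps i \<omega>) F)} = (\<Union>s\<in>P. C s)"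
  proof (rule set_eqI)
    fix \<omega> show "\<omega> \<in> {\<omega>\<in>space M. (\<forall>i\<in>F. eps i \<omega> \<in> {-1,1}) \<and> Q (restrict (\<lambda>i. eps i \<omega>) F)} \<longleftrightarrow> \<omega> \<in> (\<Union>s\<in>P. C s)"
    proof
      assume a: "\<omega> \<in> {\<omega>\<in>space M. (\<forall>i\<in>F. eps i \<omega> \<in> {-1,1}) \<and> Q (restrict (\<lambda>i. eps i \<omega>) F)}"
      then have "restrict (\<lambda>i. eps i \<omega>) F \<in> P" unfolding P_def by auto
      moreover have "\<omega> \<in> C (restrict (\<lambda>i. eps i \<omega>) F)" using a unfolding C_def by auto
      ultimately show "\<omega> \<in> (\<Union>s\<in>P. C s)" by blast
    next
      assume "\<omega> \<in> (\<Union>s\<in>P. C s)"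
      then obtain s where s: "s \<in> P" "\<omega> \<in> C s" by blast
      then have e: "\<And>i. i \<in> F \<Longrightarrow> eps i \<omega> = s i" "\<omega> \<in> space M" unfolding C_def by auto
      have "restrict (\<lambda>i. eps i \<omega>) F = s" using s(1) e unfolding P_def by (auto simp: PiE_def extensional_def)
      then show "\<omega> \<in> {\<omega>\<in>space M. (\<forall>i\<in>F. eps i \<omega> \<in> {-1,1}) \<and> Q (restrict (\<lambda>i. eps i \<omega>) F)}"
        using s(1) e unfolding P_def by (auto simp: PiE_def Pi_def)
    qed
  qed
  have Cev: "C s \<in> events" for s
  proof -
    have [measurable]: "Measurable.pred M (\<lambda>\<omega>. \<forall>i\<in>F. eps i \<omega> = s i)"
    proof (rule pred_intros_finite(3)[OF fin])
      fix i assume "i \<in> F"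
      then have [measurable]: "eps i \<in> borel_measurable M" using F1 by (intro meas_eps) auto
      show "Measurable.pred M (\<lambda>\<omega>. eps i \<omega> = s i)" by measurable
    qed
    show ?thesis unfolding C_def by measurable
  qed
  show ?thesis unfolding setq using finP Cev by auto
qed

lemma AE_good: "AE \<omega> in M. \<forall>i. i \<ge> 1 \<longrightarrow> eps i \<omega> \<in> {-1,1}"
proof -
  have "AE \<omega> in M. i \<ge> 1 \<longrightarrow> eps i \<omega> \<in> {-1,1}" for i
  proof (cases "i \<ge> 1")
    case True
    have ev: "{\<omega>\<in>space M. eps i \<omega> \<in> {-1,1}} \<in> events" using True by measurable
    have "{\<omega>\<in>space M. eps i \<omega> \<in> {-1,1}} = {\<omega>\<in>space M. eps i \<omega> = 1} \<union> {\<omega>\<in>space M. eps i \<omega> = -1}" by auto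
    moreover have "prob ({\<omega>\<in>space M. eps i \<omega> = 1} \<union> {\<omega>\<in>space M. eps i \<omega> = -1}) =
        prob {\<omega>\<in>space M. eps i \<omega> = 1} + prob {\<omega>\<in>space M. eps i \<omega> = -1}"
      using True by (intro finite_measure_Union) (auto)
    ultimately have "prob {\<omega>\<in>space M. eps i \<omega> \<in> {-1,1}} = 1" using p1[OF True] pm[OF True] by simp
    then have "AE \<omega> in M. \<omega> \<in> {\<omega>\<in>space M. eps i \<omega> \<in> {-1,1}}" using AE_in_set_eq_1[OF ev] by simp
    then show ?thesis by eventually_elim auto
  qed simp
  then show ?thesis by (simp add: AE_all_countable)
qed

end


definition nseq :: "nat \<Rightarrow> nat" where "nseq k = 2 * 4^(k^2)"
definition mm :: "nat \<Rightarrow> nat" where "mm k = 4^(k^2) - 4^((k-1)^2)"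
definition tt :: "nat \<Rightarrow> nat" where "tt k = nat \<lfloor>sqrt (ln (real k)) / 8\<rfloor>"
definition rr :: "nat \<Rightarrow> nat" where "rr k = 2^(k^2) * tt k"

lemma pow4_step: "k \<ge> 1 \<Longrightarrow> 4 * 4^((k-1)^2) \<le> (4::nat)^(k^2)"
proof -
  assume k: "k \<ge> 1"
  have "Suc ((k-1)^2) \<le> k^2" using k by (cases k) (auto simp: power2_eq_square)
  then have "(4::nat)^(Suc ((k-1)^2)) \<le> 4^(k^2)" by (intro power_increasing) auto
  then show ?thesis by simp
qed

lemma nseq_step: "k \<ge> 1 \<Longrightarrow> nseq (k-1) + 2 * mm k = nseq k"
  using pow4_step[of k] unfolding nseq_def mm_def by simp

lemma nseq_mono: "k \<le> k' \<Longrightarrow> nseq k \<le> nseq k'"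
  unfolding nseq_def by (intro mult_left_mono power_increasing) (auto simp: power_mono)

lemma nseq_ge: "k \<le> nseq k"
proof -
  have "k < 2^k" by (rule less_exp)
  also have "(2::nat)^k \<le> 4^k" by (intro power_mono) auto
  also have "(4::nat)^k \<le> 4^(k^2)" by (intro power_increasing) (auto simp: power2_eq_square)
  finally show ?thesis unfolding nseq_def by simp
qed

lemma mm_lower: "k \<ge> 1 \<Longrightarrow> 3 * 4^(k^2) \<le> 4 * mm k"
  using pow4_step[of k] unfolding mm_def by simp

lemma mm_upper: "mm k \<le> 4^(k^2)" unfolding mm_def by simp

lemma ln_nat_nonneg: "ln (real k) \<ge> 0" by (cases "k = 0") auto

lemma tt_mono: "k \<le> k' \<Longrightarrow> tt k \<le> tt k'"
proof -
  assume kk: "k \<le> k'"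
  have "ln (real k) \<le> ln (real k')" using kk by (cases "k = 0") (auto simp: ln_nat_nonneg)
  then have "sqrt (ln (real k)) / 8 \<le> sqrt (ln (real k')) / 8" by simp
  then show ?thesis unfolding tt_def by (intro nat_mono floor_mono)
qed

lemma rr_mono: "k \<le> k' \<Longrightarrow> rr k \<le> rr k'"
  unfolding rr_def by (intro mult_mono tt_mono power_increasing) (auto simp: power_mono)

lemma tt_upper: "k \<ge> 1 \<Longrightarrow> real (tt k)^2 \<le> ln (real k) / 64"
proof -
  assume k: "k \<ge> 1"
  define x where "x = sqrt (ln (real k)) / 8"
  have x0: "x \<ge> 0" unfolding x_def using k by simp
  have "real (tt k) \<le> x" unfolding tt_def x_def[symmetric] using x0 by linarith
  then have "real (tt k)^2 \<le> x^2" by (intro power_mono) auto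
  also have "x^2 = ln (real k) / 64" unfolding x_def using k by (simp add: power_divide)
  finally show ?thesis .
qed

lemma tt_lower: "ln (real k) \<ge> 256 \<Longrightarrow> real (tt k) \<ge> sqrt (ln (real k)) / 16"
proof -
  assume k: "ln (real k) \<ge> 256"
  define x where "x = sqrt (ln (real k)) / 8"
  have "sqrt (ln (real k)) \<ge> sqrt 256" using k by (intro real_sqrt_le_mono) auto
  then have x2: "x \<ge> 2" unfolding x_def by simp
  have "real (tt k) \<ge> x - 1" unfolding tt_def x_def[symmetric] using x2 by linarith
  then show ?thesis using x2 unfolding x_def by linarith
qed

lemma ln_large: "\<exists>K. \<forall>k\<ge>K. ln (real k) \<ge> X"
proof (intro exI allI impI)
  fix k assume "k \<ge> nat \<lceil>exp X\<rceil> + 1"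
  then have "real k \<ge> exp X" by linarith
  moreover have "exp X > 0" by simp
  ultimately show "ln (real k) \<ge> X" by (metis ln_exp ln_le_cancel_iff order_less_le_trans)
qed

lemma tt_large: "\<exists>K. \<forall>k\<ge>K. real (tt k) \<ge> T"
proof -
  obtain K where K: "\<forall>k\<ge>K. ln (real k) \<ge> max 256 ((16 * T)^2)" using ln_large by blast
  show ?thesis
  proof (intro exI[of _ K] allI impI)
    fix k assume "k \<ge> K"
    then have l: "ln (real k) \<ge> 256" "ln (real k) \<ge> (16*T)^2" using K by auto
    have "sqrt (ln (real k)) \<ge> sqrt ((16*T)^2)" using l by (intro real_sqrt_le_mono) auto
    then have "sqrt (ln (real k)) \<ge> 16 * T" by (smt (verit) real_sqrt_abs)
    then show "real (tt k) \<ge> T" using tt_lower[OF l(1)] by linarith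
  qed
qed


lemma rr_sq: "real (rr k)^2 = 4^(k^2) * real (tt k)^2"
proof -
  have "(2::real)^(k^2) * 2^(k^2) = 4^(k^2)" by (simp add: power_mult_distrib[symmetric])
  then show ?thesis unfolding rr_def by (simp add: power2_eq_square algebra_simps)
qed

lemma pow2_big: "k \<ge> 4 \<Longrightarrow> 32 * k \<le> 2^(k^2)"
proof -
  assume k: "k \<ge> 4"
  have "k < 2^k" by (rule less_exp)
  then have "32 * k \<le> 32 * 2^k" by simp
  also have "(32::nat) * 2^k = 2^(k+5)" by (simp add: power_add)
  also have "(2::nat)^(k+5) \<le> 2^(k^2)"
  proof (intro power_increasing)
    have "k * 4 \<le> k * k" using k by (intro mult_left_mono) auto
    then show "k + 5 \<le> k^2" unfolding power2_eq_square using k by linarith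
  qed auto
  finally show ?thesis .
qed

lemma pB_num: "\<exists>K. \<forall>k\<ge>K. k \<ge> 1 \<and> mm k \<ge> 1 \<and> real (mm k) \<le> real (rr k)^2 \<and> 8 * rr k \<le> mm k \<and>
    1 / real k \<le> exp (-16 * real (rr k)^2 / real (mm k)) / 2"
proof -
  obtain K1 where K1: "\<forall>k\<ge>K1. real (tt k) \<ge> 1" using tt_large by blast
  obtain K2 where K2: "\<forall>k\<ge>K2. ln (real k) \<ge> 3/2" using ln_large by blast
  show ?thesis
  proof (intro exI[of _ "max 4 (max K1 K2)"] allI impI)
    fix k assume "k \<ge> max 4 (max K1 K2)"
    then have k4: "k \<ge> 4" and t1: "real (tt k) \<ge> 1" and l: "ln (real k) \<ge> 3/2" using K1 K2 by auto
    have tu: "real (tt k)^2 \<le> ln (real k) / 64" using tt_upper k4 by simp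
    have q0: "(4::real)^(k^2) > 0" by simp
    have ml: "3 * 4^(k^2) \<le> 4 * mm k" using mm_lower[of k] k4 by simp
    have "real (3 * 4^(k^2)) \<le> real (4 * mm k)" using ml by (simp only: of_nat_le_iff)
    then have m3: "3 * 4^(k^2) \<le> 4 * real (mm k)" by simp
    have "(1::nat) \<le> 4^(k^2)" by simp
    then have m1: "mm k \<ge> 1" using ml by linarith
    have mpos: "real (mm k) > 0" using m1 by simp
    have c1: "real (mm k) \<le> real (rr k)^2"
    proof -
      have "real (mm k) \<le> real ((4::nat)^(k^2))" using mm_upper[of k] by (simp only: of_nat_le_iff)
      then have "real (mm k) \<le> 4^(k^2)" by simp
      also have "\<dots> \<le> 4^(k^2) * real (tt k)^2" using t1 q0 by (simp add: one_le_power)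
      finally show ?thesis by (simp add: rr_sq)
    qed
    have c2: "8 * rr k \<le> mm k"
    proof -
      have "real (tt k) \<le> real (tt k)^2" using t1 by (simp add: power2_eq_square)
      also have "\<dots> \<le> ln (real k) / 64" by (rule tu)
      also have "\<dots> \<le> real k" using ln_le_minus_one[of "real k"] k4 by simp
      finally have "tt k \<le> k" by simp
      then have "32 * tt k \<le> 2^(k^2)" using pow2_big[OF k4] by linarith
      then have "32 * tt k * 2^(k^2) \<le> 2^(k^2) * (2::nat)^(k^2)" by simp
      also have "\<dots> = 4^(k^2)" by (simp add: power_mult_distrib[symmetric])
      finally have "32 * rr k \<le> 4^(k^2)" unfolding rr_def by (simp add: algebra_simps)
      then have "32 * rr k \<le> 4 * mm k" using mm_lower[of k] k4 by linarith
      then show ?thesis by simp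
    qed
    have c3: "16 * real (rr k)^2 / real (mm k) \<le> ln (real k) / 3"
    proof -
      have "16 * real (rr k)^2 \<le> 16 * (4^(k^2) * (ln (real k) / 64))"
        unfolding rr_sq using tu q0 by (intro mult_left_mono) auto
      also have "\<dots> = (3 * 4^(k^2)) * (ln (real k) / 12)" by simp
      also have "\<dots> \<le> (4 * real (mm k)) * (ln (real k) / 12)" using m3 l by (intro mult_right_mono) auto
      also have "\<dots> = real (mm k) * (ln (real k) / 3)" by simp
      finally show ?thesis using mpos by (simp add: divide_simps mult.commute)
    qed
    have c4: "1 / real k \<le> exp (- (ln (real k) / 3)) / 2"
    proof -
      have kpos: "real k > 0" using k4 by simp
      have "2 \<le> 1 + 2 * ln (real k) / 3" using l by simp
      also have "\<dots> \<le> exp (2 * ln (real k) / 3)" by (rule exp_ge_add_one_self)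
      also have "exp (2 * ln (real k) / 3) = exp (ln (real k)) * exp (- (ln (real k) / 3))"
        by (simp add: exp_add[symmetric])
      also have "\<dots> = real k * exp (- (ln (real k) / 3))" using kpos by simp
      finally show ?thesis using kpos by (simp add: divide_simps mult.commute)
    qed
    have c5: "exp (- (ln (real k) / 3)) \<le> exp (-16 * real (rr k)^2 / real (mm k))" using c3 by simp
    have c6: "1 / real k \<le> exp (-16 * real (rr k)^2 / real (mm k)) / 2" using c4 c5 by linarith
    show "k \<ge> 1 \<and> mm k \<ge> 1 \<and> real (mm k) \<le> real (rr k)^2 \<and> 8 * rr k \<le> mm k \<and>
        1 / real k \<le> exp (-16 * real (rr k)^2 / real (mm k)) / 2"
      by (intro conjI) (fact | use k4 in simp)+
  qed
qed

lemma LL_bound: "k \<ge> 4 \<Longrightarrow> ln (ln (real (nseq k) + 3)) \<le> 3 * ln (real k)"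
proof -
  assume k: "k \<ge> 4"
  have "(4::real)^1 \<le> 4^(k^2)" using k by (intro power_increasing) (auto simp: power2_eq_square)
  then have h: "True" "(4::real) \<le> 4^(k^2)" by simp_all
  have e: "real (nseq k) = 2 * 4^(k^2)" unfolding nseq_def by simp
  have "real (nseq k) + 3 \<le> 4 * 4^(k^2)" using h(2) unfolding e by linarith
  also have "\<dots> = 4^(k^2+1)" by simp
  finally have "real (nseq k) + 3 \<le> 4^(k^2+1)" .
  then have "ln (real (nseq k) + 3) \<le> ln (4^(k^2+1))" by simp
  also have "\<dots> = real (k^2+1) * ln 4" by (simp only: ln_realpow)
  also have "\<dots> \<le> real (k^2+1) * 3" using ln_le_minus_one[of 4] by (intro mult_left_mono) auto
  also have "\<dots> \<le> real k ^ 3"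
  proof -
    have c: "real k^3 = real k * real k^2" by (simp add: power3_eq_cube power2_eq_square)
    have "4 * real k^2 \<le> real k * real k^2" using k by (intro mult_right_mono) auto
    moreover have "real k^2 \<ge> 4^2" using k by (intro power_mono) auto
    ultimately have "3 * (real k^2 + 1) \<le> real k^3" unfolding c by simp
    then show ?thesis by (simp add: algebra_simps)
  qed
  finally have a: "ln (real (nseq k) + 3) \<le> real k ^ 3" .
  have b: "ln (real (nseq k) + 3) > 0" by simp
  have "ln (ln (real (nseq k) + 3)) \<le> ln (real k ^ 3)" using a b k by (subst ln_le_cancel_iff) auto
  also have "\<dots> = 3 * ln (real k)" by (simp add: ln_realpow)
  finally show ?thesis .
qed

lemma final_num:
  assumes A: "A \<ge> 1"
  shows "\<exists>J. \<forall>j\<ge>J. 1 \<le> rr j \<and> A * real (nseq j) \<le> real (rr j)^2 \<and>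
     (1/1536) * (real (nseq j) * ln (ln (real (nseq j) + 3))) \<le> real (rr j)^2"
proof -
  obtain K1 where K1: "\<forall>k\<ge>K1. real (tt k) \<ge> sqrt (2*A)" using tt_large by blast
  obtain K2 where K2: "\<forall>k\<ge>K2. ln (real k) \<ge> 256" using ln_large by blast
  show ?thesis
  proof (intro exI[of _ "max 4 (max K1 K2)"] allI impI)
    fix k assume "k \<ge> max 4 (max K1 K2)"
    then have k4: "k \<ge> 4" and t1: "real (tt k) \<ge> sqrt (2*A)" and l: "ln (real k) \<ge> 256" using K1 K2 by auto
    have q0: "(4::real)^(k^2) > 0" by simp
    have ns: "real (nseq k) = 2 * 4^(k^2)" unfolding nseq_def by simp
    have "sqrt (2*A)^2 \<le> real (tt k)^2" using t1 A by (intro power_mono) auto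
    then have tA: "real (tt k)^2 \<ge> 2*A" using A by simp
    have tl: "real (tt k) \<ge> sqrt (ln (real k)) / 16" by (rule tt_lower[OF l])
    have tl2: "real (tt k)^2 \<ge> ln (real k) / 256"
    proof -
      have "(sqrt (ln (real k)) / 16)^2 \<le> real (tt k)^2" using tl l by (intro power_mono) auto
      then show ?thesis using l by (simp add: power_divide)
    qed
    have "real (tt k) \<ge> 1" using tA A by (cases "tt k") auto
    then have r1: "1 \<le> rr k" unfolding rr_def by (simp add: Suc_le_eq)
    have r2: "A * real (nseq k) \<le> real (rr k)^2"
      unfolding rr_sq ns using tA q0 by (simp add: algebra_simps)
    have r3: "(1/1536) * (real (nseq k) * ln (ln (real (nseq k) + 3))) \<le> real (rr k)^2"
    proof -
      have "ln (ln (real (nseq k) + 3)) \<le> 3 * ln (real k)" by (rule LL_bound[OF k4])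
      also have "\<dots> \<le> 768 * real (tt k)^2" using tl2 by simp
      finally have "(1/1536) * (2 * 4^(k^2) * ln (ln (real (nseq k) + 3))) \<le> (1/1536) * (2 * 4^(k^2) * (768 * real (tt k)^2))"
        using q0 by (intro mult_left_mono) auto
      then show ?thesis unfolding rr_sq ns by simp
    qed
    show "1 \<le> rr k \<and> A * real (nseq k) \<le> real (rr k)^2 \<and>
       (1/1536) * (real (nseq k) * ln (ln (real (nseq k) + 3))) \<le> real (rr k)^2" using r1 r2 r3 by simp
  qed
qed


lemma tele: "K \<ge> 1 \<Longrightarrow> (\<Prod>k\<in>{K..K+n}. 1 - 1 / real k) = (real K - 1) / real (K + n)"
proof (induction n)
  case 0 then show ?case by (simp add: field_simps)
next
  case (Suc n)
  have "{K..K + Suc n} = insert (K + Suc n) {K..K+n}" by auto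
  then have "(\<Prod>k\<in>{K..K+Suc n}. 1 - 1 / real k) = (1 - 1 / real (K + Suc n)) * (\<Prod>k\<in>{K..K+n}. 1 - 1 / real k)"
    by simp
  also have "\<dots> = (1 - 1 / real (K + Suc n)) * ((real K - 1) / real (K + n))" using Suc by simp
  also have "1 - 1 / real (K + Suc n) = real (K + n) / real (K + Suc n)" by (simp add: field_simps)
  also have "real (K + n) / real (K + Suc n) * ((real K - 1) / real (K + n)) = (real K - 1) / real (K + Suc n)"
    using Suc.prems by simp
  finally show ?case .
qed

definition Fk :: "nat \<Rightarrow> nat set" where "Fk k = {nseq (k-1)<..nseq k}"

lemma card_Fk: "k \<ge> 1 \<Longrightarrow> card (Fk k) = 2 * mm k"
  unfolding Fk_def using nseq_step[of k] by simp

lemma Fk_sub: "Fk k \<subseteq> {1..}" unfolding Fk_def by auto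

lemma Fk_disj: "disjoint_family_on Fk {1..}"
proof (unfold disjoint_family_on_def, intro ballI impI)
  fix k k' :: nat assume kk: "k \<in> {1..}" "k' \<in> {1..}" "k \<noteq> k'"
  show "Fk k \<inter> Fk k' = {}"
  proof (cases "k < k'")
    case True
    then have "nseq k \<le> nseq (k'-1)" by (intro nseq_mono) auto
    then show ?thesis unfolding Fk_def by auto
  next
    case False
    then have "nseq k' \<le> nseq (k-1)" using kk by (intro nseq_mono) auto
    then show ?thesis unfolding Fk_def by auto
  qed
qed

context rad begin

definition Bset :: "nat \<Rightarrow> 'a set" where
  "Bset k = {\<omega>\<in>space M. (\<forall>i\<in>Fk k. eps i \<omega> \<in> {-1,1}) \<and> (\<Sum>i\<in>Fk k. eps i \<omega>) \<ge> 2 * real (rr k)}"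

lemma Bset_ev: "Bset k \<in> events"
proof -
  have [measurable]: "(\<lambda>\<omega>. \<Sum>i\<in>Fk k. eps i \<omega>) \<in> borel_measurable M"
    using Fk_sub by (intro borel_measurable_sum meas_eps) auto
  have [measurable]: "Measurable.pred M (\<lambda>\<omega>. \<forall>i\<in>Fk k. eps i \<omega> \<in> {-1,1})"
  proof (rule pred_intros_finite(3))
    show "finite (Fk k)" unfolding Fk_def by simp
    fix i assume "i \<in> Fk k"
    then have [measurable]: "eps i \<in> borel_measurable M" using Fk_sub by (intro meas_eps) auto
    show "Measurable.pred M (\<lambda>\<omega>. eps i \<omega> \<in> {-1,1})" by measurable
  qed
  show ?thesis unfolding Bset_def by measurable
qed

lemma sum_restrict: "(\<Sum>i\<in>F. restrict f F i) = (\<Sum>i\<in>F. f i)"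
  by (rule sum.cong) auto

lemma prob_Bset:
  assumes k1: "k \<ge> 1" and m1: "mm k \<ge> 1" and c1: "real (mm k) \<le> real (rr k)^2"
    and c2: "8 * rr k \<le> mm k" and c3: "1 / real k \<le> exp (-16 * real (rr k)^2 / real (mm k)) / 2"
  shows "prob (Bset k) \<ge> 1 / real k"
proof -
  define F where "F = Fk k"
  define m where "m = mm k"
  define r where "r = rr k"
  have cF: "card F = 2*m" unfolding F_def m_def by (rule card_Fk[OF k1])
  have finF: "finite F" unfolding F_def Fk_def by simp
  have neF: "F \<noteq> {}" using cF m1 unfolding m_def by auto
  have "Bset k = {\<omega>\<in>space M. (\<forall>i\<in>F. eps i \<omega> \<in> {-1,1}) \<and> (\<lambda>s. (\<Sum>i\<in>F. s i) \<ge> 2 * real r) (restrict (\<lambda>i. eps i \<omega>) F)}"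
    unfolding Bset_def F_def r_def by auto
  then have "prob (Bset k) = real (card {s \<in> PiE F (\<lambda>_. {-1,1::real}). (\<Sum>i\<in>F. s i) \<ge> 2 * real r}) / 2^card F"
    using count[OF finF neF, of "\<lambda>s. (\<Sum>i\<in>F. s i) \<ge> 2 * real r"] Fk_sub unfolding F_def by (simp add: sum_restrict)
  also have "\<dots> \<ge> real (\<Sum>j\<in>{r..2*r}. (2*m) choose (m+j)) / 4^m"
  proof -
    have "2*r \<le> m" using c2 unfolding r_def m_def by simp
    then have "(\<Sum>j\<in>{r..2*r}. (2*m) choose (m+j)) \<le> card {s \<in> PiE F (\<lambda>_. {-1,1::real}). (\<Sum>i\<in>F. s i) \<ge> 2 * real r}"
      by (rule pat_count[OF finF cF])
    then have "real (\<Sum>j\<in>{r..2*r}. (2*m) choose (m+j)) \<le> real (card {s \<in> PiE F (\<lambda>_. {-1,1::real}). (\<Sum>i\<in>F. s i) \<ge> 2 * real r})"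
      by (simp only: of_nat_le_iff)
    moreover have "(2::real)^card F = 4^m" unfolding cF by (simp add: power_mult)
    ultimately show ?thesis by (simp add: divide_right_mono)
  qed
  also have "real (\<Sum>j\<in>{r..2*r}. (2*m) choose (m+j)) / 4^m \<ge> exp (-16 * real r^2 / real m) / 2"
  proof -
    have "4^m * exp (-16 * real r^2 / real m) / 2 \<le> real (\<Sum>j\<in>{r..2*r}. (2*m) choose (m+j))"
      by (rule binom_tail) (use m1 c1 c2 in \<open>auto simp: m_def r_def\<close>)
    then show ?thesis by (simp add: divide_simps mult.commute)
  qed
  finally show ?thesis using c3 unfolding m_def r_def by linarith
qed

lemma indep_B:
  assumes L: "finite L" "L \<noteq> {}" "L \<subseteq> {1..}"
  shows "prob (\<Inter>k\<in>L. space M - Bset k) = (\<Prod>k\<in>L. prob (space M - Bset k))"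
proof -
  have iv: "indep_vars (\<lambda>k. PiM (Fk k) (\<lambda>_. borel)) (\<lambda>k \<omega>. restrict (\<lambda>i. eps i \<omega>) (Fk k)) {1..}"
    by (rule indep_vars_restrict[OF ind]) (use Fk_sub Fk_disj in auto)
  define P where "P k x = (\<not> ((\<forall>i\<in>Fk k. x i \<in> {-1,1::real}) \<and> (\<Sum>i\<in>Fk k. x i) \<ge> 2 * real (rr k)))" for k x
  have Pm: "{x \<in> space (PiM (Fk k) (\<lambda>_. borel)). P k x} \<in> sets (PiM (Fk k) (\<lambda>_. borel))" for k
  proof -
    have fin: "finite (Fk k)" unfolding Fk_def by simp
    have [measurable]: "(\<lambda>x. \<Sum>i\<in>Fk k. x i) \<in> borel_measurable (PiM (Fk k) (\<lambda>_. borel :: real measure))"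
      by (intro borel_measurable_sum) (auto intro: measurable_component_singleton)
    have [measurable]: "Measurable.pred (PiM (Fk k) (\<lambda>_. borel :: real measure)) (\<lambda>x. x i \<in> {-1,1::real})" if "i \<in> Fk k" for i
      using that by measurable
    show ?thesis unfolding P_def using fin by measurable
  qed
  have ie: "indep_events (\<lambda>k. {\<omega>\<in>space M. P k (restrict (\<lambda>i. eps i \<omega>) (Fk k))}) {1..}"
    by (rule indep_eventsI_indep_vars[OF iv]) (use Pm in auto)
  have eq: "{\<omega>\<in>space M. P k (restrict (\<lambda>i. eps i \<omega>) (Fk k))} = space M - Bset k" for k
    unfolding P_def Bset_def by auto
  show ?thesis using ie L unfolding indep_events_def eq by auto
qed

end


lemma sum_restrict_sub: "A \<subseteq> G \<Longrightarrow> (\<Sum>i\<in>A. restrict f G i) = (\<Sum>i\<in>A. f i)"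
  by (rule sum.cong) auto

context rad begin

definition Sn :: "nat \<Rightarrow> 'a \<Rightarrow> real" where "Sn n \<omega> = (\<Sum>i\<in>{1..n}. eps i \<omega>)"
definition Eset :: "nat \<Rightarrow> 'a set" where "Eset j = {\<omega>\<in>space M. Sn (nseq j) \<omega> \<ge> real (rr j)}"

lemma Sn_meas[measurable]: "Sn n \<in> borel_measurable M"
proof -
  have "(\<lambda>\<omega>. \<Sum>i\<in>{1..n}. eps i \<omega>) \<in> borel_measurable M" by (intro borel_measurable_sum meas_eps) auto
  then show ?thesis unfolding Sn_def[abs_def] .
qed

lemma Eset_ev: "Eset j \<in> events" unfolding Eset_def by measurable

lemma Sn_split: "k \<ge> 1 \<Longrightarrow> Sn (nseq k) \<omega> = Sn (nseq (k-1)) \<omega> + (\<Sum>i\<in>Fk k. eps i \<omega>)"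
proof -
  assume k: "k \<ge> 1"
  have le: "nseq (k-1) \<le> nseq k" by (intro nseq_mono) auto
  have "{1..nseq k} = {1..nseq (k-1)} \<union> Fk k" unfolding Fk_def using le by auto
  moreover have "{1..nseq (k-1)} \<inter> Fk k = {}" unfolding Fk_def by auto
  ultimately show ?thesis unfolding Sn_def by (simp add: sum.union_disjoint Fk_def)
qed

lemma step_D:
  assumes K1: "K \<ge> 1"
    and pB: "\<And>k. k \<in> {K..2*K} \<Longrightarrow> prob (Bset k) \<ge> 1 / real k"
  shows "prob (\<Union>j\<in>{K-1..}. Eset j) \<ge> 1/4"
proof -
  define L where "L = {K..2*K}"
  have L: "finite L" "L \<noteq> {}" "L \<subseteq> {1..}" unfolding L_def using K1 by auto
  define G where "G = {1..nseq (2*K)}"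
  have finG: "finite G" and G1: "G \<subseteq> {1..}" unfolding G_def by auto
  have subG: "{1..nseq k} \<subseteq> G" if "k \<le> 2*K" for k unfolding G_def using nseq_mono[OF that] by auto
  have s1: "prob (\<Inter>k\<in>L. space M - Bset k) \<le> 1/2"
  proof -
    have "prob (\<Inter>k\<in>L. space M - Bset k) = (\<Prod>k\<in>L. prob (space M - Bset k))" by (rule indep_B[OF L])
    also have "\<dots> \<le> (\<Prod>k\<in>L. 1 - 1 / real k)"
    proof (rule prod_mono)
      fix k assume "k \<in> L"
      then show "0 \<le> prob (space M - Bset k) \<and> prob (space M - Bset k) \<le> 1 - 1 / real k"
        using pB[of k] prob_compl[OF Bset_ev[of k]] unfolding L_def by auto
    qed
    also have "(\<Prod>k\<in>L. 1 - 1 / real k) = (\<Prod>k\<in>{K..K+K}. 1 - 1 / real k)" unfolding L_def by (simp add: mult_2)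
    also have "\<dots> = (real K - 1) / real (K + K)" by (rule tele[OF K1])
    also have "\<dots> \<le> 1/2" using K1 by (simp add: divide_simps)
    finally show ?thesis .
  qed
  define U where "U = (\<Union>k\<in>L. Bset k)"
  have Uev: "U \<in> events" unfolding U_def using L(1) Bset_ev by auto
  have s2: "prob U \<ge> 1/2"
  proof -
    have "U = space M - (\<Inter>k\<in>L. space M - Bset k)" unfolding U_def using L(2) Bset_ev sets.sets_into_space by blast
    moreover have "(\<Inter>k\<in>L. space M - Bset k) \<in> events" using L Bset_ev by (intro sets.finite_INT) auto
    ultimately have "prob U = 1 - prob (\<Inter>k\<in>L. space M - Bset k)" using prob_compl by simp
    then show ?thesis using s1 by simp
  qed
  define Qw where "Qw s = (\<exists>k\<in>L. (\<Sum>i\<in>{1..nseq k}. s i) \<ge> real (rr k))" for s :: "nat \<Rightarrow> real"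
  define Qm where "Qm s = (\<exists>k\<in>L. (\<Sum>i\<in>{1..nseq (k-1)}. s i) \<le> - real (rr k))" for s :: "nat \<Rightarrow> real"
  define Qp where "Qp s = (\<exists>k\<in>L. (\<Sum>i\<in>{1..nseq (k-1)}. s i) \<ge> real (rr k))" for s :: "nat \<Rightarrow> real"
  define Qh where "Qh s = (\<exists>j\<in>{K-1..2*K}. (\<Sum>i\<in>{1..nseq j}. s i) \<ge> real (rr j))" for s :: "nat \<Rightarrow> real"
  define S where "S Q = {\<omega>\<in>space M. (\<forall>i\<in>G. eps i \<omega> \<in> {-1,1}) \<and> Q (restrict (\<lambda>i. eps i \<omega>) G)}" for Q
  have Sev: "S Q \<in> events" for Q unfolding S_def by (rule count_ev[OF finG G1])
  have neG: "G \<noteq> {}" unfolding G_def by (simp add: nseq_def)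
  have s3: "AE \<omega> in M. \<omega> \<in> U \<longrightarrow> \<omega> \<in> S Qw \<union> S Qm"
    using AE_good
  proof eventually_elim
    fix \<omega> assume g: "\<forall>i. i \<ge> 1 \<longrightarrow> eps i \<omega> \<in> {-1,1}"
    show "\<omega> \<in> U \<longrightarrow> \<omega> \<in> S Qw \<union> S Qm"
    proof
      assume "\<omega> \<in> U"
      then obtain k where k: "k \<in> L" "\<omega> \<in> Bset k" unfolding U_def by auto
      have k1: "k \<ge> 1" "k \<le> 2*K" using k(1) K1 unfolding L_def by auto
      have om: "\<omega> \<in> space M" using k(2) unfolding Bset_def by auto
      have gG: "\<forall>i\<in>G. eps i \<omega> \<in> {-1,1}" using g G1 by auto
      have Y: "(\<Sum>i\<in>Fk k. eps i \<omega>) \<ge> 2 * real (rr k)" using k(2) unfolding Bset_def by auto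
      have sp: "Sn (nseq k) \<omega> = Sn (nseq (k-1)) \<omega> + (\<Sum>i\<in>Fk k. eps i \<omega>)" by (rule Sn_split[OF k1(1)])
      have e1: "(\<Sum>i\<in>{1..nseq k}. restrict (\<lambda>i. eps i \<omega>) G i) = Sn (nseq k) \<omega>"
        unfolding Sn_def by (rule sum_restrict_sub[OF subG[OF k1(2)]])
      have e2: "(\<Sum>i\<in>{1..nseq (k-1)}. restrict (\<lambda>i. eps i \<omega>) G i) = Sn (nseq (k-1)) \<omega>"
        unfolding Sn_def by (rule sum_restrict_sub[OF subG]) (use k1 in simp)
      show "\<omega> \<in> S Qw \<union> S Qm"
      proof (cases "Sn (nseq k) \<omega> \<ge> real (rr k)")
        case True
        then have "(\<Sum>i\<in>{1..nseq k}. restrict (\<lambda>i. eps i \<omega>) G i) \<ge> real (rr k)" using e1 by simp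
        then have "Qw (restrict (\<lambda>i. eps i \<omega>) G)" unfolding Qw_def using k(1) by blast
        then show ?thesis unfolding S_def using om gG by auto
      next
        case False
        then have "Sn (nseq (k-1)) \<omega> \<le> - real (rr k)" using sp Y by linarith
        then have "(\<Sum>i\<in>{1..nseq (k-1)}. restrict (\<lambda>i. eps i \<omega>) G i) \<le> - real (rr k)" using e2 by simp
        then have "Qm (restrict (\<lambda>i. eps i \<omega>) G)" unfolding Qm_def using k(1) by blast
        then show ?thesis unfolding S_def using om gG by auto
      qed
    qed
  qed
  have s4: "1/2 \<le> prob (S Qw) + prob (S Qm)"
  proof -
    have "prob U \<le> prob (S Qw \<union> S Qm)" by (rule finite_measure_mono_AE[OF s3]) (use Sev in auto)
    also have "\<dots> \<le> prob (S Qw) + prob (S Qm)" by (rule measure_Un_le) (use Sev in auto)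
    finally show ?thesis using s2 by linarith
  qed
  have s5: "prob (S Qm) = prob (S Qp)"
  proof -
    define neg where "neg s = restrict (\<lambda>i. - s i) G" for s :: "nat \<Rightarrow> real"
    define Pat where "Pat = PiE G (\<lambda>_. {-1,1::real})"
    have negsum: "(\<Sum>i\<in>{1..nseq (k-1)}. neg s i) = - (\<Sum>i\<in>{1..nseq (k-1)}. s i)" if "k \<in> L" for k s
    proof -
      have "k-1 \<le> 2*K" using that unfolding L_def by auto
      then have "{1..nseq (k-1)} \<subseteq> G" by (rule subG)
      then show ?thesis unfolding neg_def by (subst sum_restrict_sub) (simp_all add: sum_negf)
    qed
    have negneg: "neg (neg s) = s" if "s \<in> Pat" for s
      using that unfolding neg_def Pat_def by (auto simp: PiE_def extensional_def fun_eq_iff)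
    have negPat: "neg s \<in> Pat" if "s \<in> Pat" for s
      using that unfolding neg_def Pat_def by (auto simp: PiE_def)
    have QmQp: "Qp (neg s) \<longleftrightarrow> Qm s" for s
    proof -
      have "\<forall>k\<in>L. (real (rr k) \<le> (\<Sum>i\<in>{1..nseq (k-1)}. neg s i)) \<longleftrightarrow> ((\<Sum>i\<in>{1..nseq (k-1)}. s i) \<le> - real (rr k))"
        using negsum by auto
      then show ?thesis unfolding Qp_def Qm_def by blast
    qed
    have bij: "bij_betw neg {s \<in> Pat. Qm s} {s \<in> Pat. Qp s}"
    proof (rule bij_betw_byWitness[where f' = neg])
      show "\<forall>a\<in>{s \<in> Pat. Qm s}. neg (neg a) = a" using negneg by auto
      show "\<forall>a'\<in>{s \<in> Pat. Qp s}. neg (neg a') = a'" using negneg by auto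
      show "neg ` {s \<in> Pat. Qm s} \<subseteq> {s \<in> Pat. Qp s}" using negPat QmQp by blast
      show "neg ` {s \<in> Pat. Qp s} \<subseteq> {s \<in> Pat. Qm s}"
      proof
        fix x assume "x \<in> neg ` {s \<in> Pat. Qp s}"
        then obtain s where s: "s \<in> Pat" "Qp s" "x = neg s" by blast
        have "Qp (neg (neg s))" using s negneg by simp
        then have "Qm (neg s)" using QmQp by blast
        then show "x \<in> {s \<in> Pat. Qm s}" using s negPat by blast
      qed
    qed
    have "card {s \<in> Pat. Qm s} = card {s \<in> Pat. Qp s}" by (rule bij_betw_same_card[OF bij])
    then show ?thesis unfolding S_def count[OF finG neG G1] Pat_def by simp
  qed
  have QwQh: "Qh s" if "Qw s" for s
  proof -
    obtain k where k: "k \<in> L" "(\<Sum>i\<in>{1..nseq k}. s i) \<ge> real (rr k)" using \<open>Qw s\<close> unfolding Qw_def by blast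
    have "k \<in> {K-1..2*K}" using k(1) unfolding L_def by auto
    then show ?thesis unfolding Qh_def using k(2) by blast
  qed
  have HW: "S Qw \<subseteq> S Qh" unfolding S_def using QwQh by blast
  have HV: "S Qp \<subseteq> S Qh"
  proof
    fix \<omega> assume "\<omega> \<in> S Qp"
    then obtain k where k: "k \<in> L" "(\<Sum>i\<in>{1..nseq (k-1)}. restrict (\<lambda>i. eps i \<omega>) G i) \<ge> real (rr k)"
      and rest: "\<omega> \<in> space M" "\<forall>i\<in>G. eps i \<omega> \<in> {-1,1}" unfolding S_def Qp_def by auto
    have "rr (k-1) \<le> rr k" by (intro rr_mono) auto
    then have "k - 1 \<in> {K-1..2*K}" "(\<Sum>i\<in>{1..nseq (k-1)}. restrict (\<lambda>i. eps i \<omega>) G i) \<ge> real (rr (k-1))"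
      using k unfolding L_def by auto
    then show "\<omega> \<in> S Qh" unfolding S_def Qh_def using rest by blast
  qed
  have s6: "prob (S Qh) \<ge> 1/4"
  proof -
    have "prob (S Qw) \<le> prob (S Qh)" "prob (S Qp) \<le> prob (S Qh)"
      using HW HV Sev by (auto intro: finite_measure_mono)
    then show ?thesis using s4 s5 by linarith
  qed
  have "S Qh \<subseteq> (\<Union>j\<in>{K-1..}. Eset j)"
  proof
    fix \<omega> assume "\<omega> \<in> S Qh"
    then obtain j where j: "j \<in> {K-1..2*K}" "(\<Sum>i\<in>{1..nseq j}. restrict (\<lambda>i. eps i \<omega>) G i) \<ge> real (rr j)"
      and rest: "\<omega> \<in> space M" unfolding S_def Qh_def by auto
    have "(\<Sum>i\<in>{1..nseq j}. restrict (\<lambda>i. eps i \<omega>) G i) = Sn (nseq j) \<omega>"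
      unfolding Sn_def by (rule sum_restrict_sub[OF subG]) (use j in auto)
    then show "\<omega> \<in> (\<Union>j\<in>{K-1..}. Eset j)" using j rest unfolding Eset_def by auto
  qed
  moreover have "(\<Union>j\<in>{K-1..}. Eset j) \<in> events" using Eset_ev by auto
  ultimately have "prob (S Qh) \<le> prob (\<Union>j\<in>{K-1..}. Eset j)" using Sev by (intro finite_measure_mono)
  then show ?thesis using s6 by linarith
qed

end


lemma powr_sqrt_pow: "X > 0 \<Longrightarrow> X powr (real d / 2) = sqrt X ^ d"
proof -
  assume X: "X > 0"
  have "sqrt X ^ d = sqrt X powr real d" using powr_realpow[of "sqrt X" d] X by simp
  also have "\<dots> = (X powr (1/2)) powr real d" using X by (simp add: powr_half_sqrt)
  also have "\<dots> = X powr (real d / 2)" by (simp add: powr_powr)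
  finally show ?thesis by simp
qed

lemma det:
  "\<exists>J \<delta>. \<delta> > 0 \<and> (\<forall>j\<ge>J. \<forall>x::nat\<Rightarrow>real. (\<forall>i\<ge>1. x i = 1 \<or> x i = -1) \<longrightarrow>
      (\<Sum>i\<in>{1..nseq j}. x i) \<ge> real (rr j) \<longrightarrow>
      esym x d (nseq j) / (real (nseq j) * ln (ln (real (nseq j) + 3))) powr (real d / 2) \<ge> \<delta>)"
proof -
  obtain A where A: "A \<ge> 1" "\<And>n S. 1 \<le> n \<Longrightarrow> A * n \<le> S^2 \<Longrightarrow> 1 \<le> S \<Longrightarrow> fact d * hp d n S \<ge> S^d / 2"
    using hp_lower[of d] by blast
  obtain J where J: "\<And>j. j \<ge> J \<Longrightarrow> 1 \<le> rr j \<and> A * real (nseq j) \<le> real (rr j)^2 \<and>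
     (1/1536) * (real (nseq j) * ln (ln (real (nseq j) + 3))) \<le> real (rr j)^2"
    using final_num[OF A(1)] by blast
  define c where "c = sqrt (1/1536)"
  define \<delta> where "\<delta> = c^d / (2 * fact d)"
  have c0: "c > 0" unfolding c_def by simp
  show ?thesis
  proof (intro exI[of _ J] exI[of _ \<delta>] conjI allI impI)
    show "\<delta> > 0" unfolding \<delta>_def using c0 by simp
    fix j x assume j: "j \<ge> J" and pm: "\<forall>i\<ge>1. x i = 1 \<or> x i = -1"
      and Sr: "(\<Sum>i\<in>{1..nseq j}. x i) \<ge> real (rr j)"
    define n where "n = nseq j"
    define S where "S = (\<Sum>i\<in>{1..nseq j}. x i)"
    define r where "r = real (rr j)"
    define X where "X = real n * ln (ln (real n + 3))"
    have Jj: "1 \<le> r" "A * real n \<le> r^2" "(1/1536) * X \<le> r^2" using J[OF j] unfolding r_def n_def X_def by auto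
    have n1: "real n \<ge> 2" unfolding n_def nseq_def by simp
    have S1: "1 \<le> S" "r \<le> S" using Sr Jj unfolding S_def r_def by auto
    have rS: "r^2 \<le> S^2" using S1 Jj by (intro power_mono) auto
    have e: "esym x d n = hp d (real n) S" unfolding S_def n_def by (rule esym_hp) (use pm in auto)
    have h: "fact d * hp d (real n) S \<ge> S^d / 2" using A(2)[of "real n" S] n1 Jj rS S1 by auto
    have "S^d \<le> hp d (real n) S * (2 * fact d)" using h by (simp add: algebra_simps)
    then have hp: "hp d (real n) S \<ge> S^d / (2 * fact d)"
      by (subst pos_divide_le_eq) auto
    have lnpos: "ln (real n + 3) > 1"
    proof -
      have "exp 1 < (5::real)" using exp_le by linarith
      then have "exp 1 < real n + 3" using n1 by linarith
      then have "ln (exp 1) < ln (real n + 3)" using n1 by (subst ln_less_cancel_iff) auto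
      then show ?thesis by simp
    qed
    have X0: "X > 0" unfolding X_def using n1 lnpos by simp
    have cX: "c * sqrt X \<le> S"
    proof -
      have "c * sqrt X = sqrt ((1/1536) * X)" unfolding c_def by (simp only: real_sqrt_mult)
      also have "\<dots> \<le> sqrt (r^2)" using Jj by (intro real_sqrt_le_mono) auto
      also have "\<dots> = r" using Jj by simp
      finally show ?thesis using S1 by linarith
    qed
    have sX: "sqrt X > 0" using X0 by simp
    have "\<delta> = (c * sqrt X)^d / (2 * fact d) / sqrt X ^ d"
      unfolding \<delta>_def using sX by (simp add: power_mult_distrib)
    also have "\<dots> \<le> S^d / (2 * fact d) / sqrt X ^ d"
      using cX c0 sX by (intro divide_right_mono power_mono) auto
    also have "\<dots> \<le> hp d (real n) S / sqrt X ^ d" using hp sX by (intro divide_right_mono) auto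
    also have "\<dots> = esym x d n / X powr (real d / 2)" using powr_sqrt_pow[OF X0, of d] e by simp
    finally show "esym x d (nseq j) / (real (nseq j) * ln (ln (real (nseq j) + 3))) powr (real d / 2) \<ge> \<delta>"
      unfolding n_def X_def .
  qed
qed

lemma limsup_ge:
  fixes f :: "nat \<Rightarrow> ereal"
  assumes "\<And>N. \<exists>n\<ge>N. a \<le> f n"
  shows "a \<le> limsup f"
  unfolding limsup_INF_SUP
proof (rule INF_greatest)
  fix N :: nat
  obtain n where "n \<ge> N" "a \<le> f n" using assms by blast
  then show "a \<le> (SUP m\<in>{N..}. f m)" by (intro SUP_upper2[of n]) auto
qed

context rad begin

lemma prob_Lset: "prob (\<Inter>K. \<Union>j\<in>{K..}. Eset j) \<ge> 1/4"
proof -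
  obtain Kb where Kb: "\<And>k. k \<ge> Kb \<Longrightarrow> k \<ge> 1 \<and> mm k \<ge> 1 \<and> real (mm k) \<le> real (rr k)^2 \<and> 8 * rr k \<le> mm k \<and>
    1 / real k \<le> exp (-16 * real (rr k)^2 / real (mm k)) / 2" using pB_num by blast
  define A where "A K = (\<Union>j\<in>{K..}. Eset j)" for K
  have Aev: "range A \<subseteq> events" unfolding A_def using Eset_ev by auto
  have dec: "decseq A" unfolding A_def decseq_def by (intro allI impI UN_mono) auto
  have lim: "(\<lambda>K. prob (A K)) \<longlonglongrightarrow> prob (\<Inter>K. A K)" by (rule finite_Lim_measure_decseq[OF Aev dec])
  have ev: "\<forall>K\<ge>max 1 Kb. 1/4 \<le> prob (A K)"
  proof (intro allI impI)
    fix K assume K: "K \<ge> max 1 Kb"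
    have "prob (\<Union>j\<in>{Suc K - 1..}. Eset j) \<ge> 1/4"
    proof (rule step_D)
      show "Suc K \<ge> 1" by simp
      fix k assume "k \<in> {Suc K..2 * Suc K}"
      then have "k \<ge> Kb" using K by auto
      then show "prob (Bset k) \<ge> 1 / real k" using Kb[of k] by (intro prob_Bset) auto
    qed
    then show "1/4 \<le> prob (A K)" unfolding A_def by simp
  qed
  have "1/4 \<le> prob (\<Inter>K. A K)" by (rule LIMSEQ_le_const[OF lim]) (use ev in blast)
  then show ?thesis unfolding A_def .
qed

lemma xi_meas: "(\<lambda>\<omega>. xi eps d n \<omega>) \<in> borel_measurable M"
  unfolding xi_def
proof (intro borel_measurable_sum borel_measurable_prod)
  fix I i assume "I \<in> {I. I \<subseteq> {1..n} \<and> card I = d}" "i \<in> I"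
  then have "i \<ge> 1" by auto
  then show "eps i \<in> borel_measurable M" by (rule meas_eps)
qed

theorem main: "prob {\<omega> \<in> space M. limsup (\<lambda>n. ereal (xi eps d n \<omega> /
              (real n * ln (ln (real n + 3))) powr (real d / 2))) > 0} > 0"
proof -
  define T where "T = {\<omega> \<in> space M. limsup (\<lambda>n. ereal (xi eps d n \<omega> /
              (real n * ln (ln (real n + 3))) powr (real d / 2))) > 0}"
  have [measurable]: "(\<lambda>\<omega>. xi eps d n \<omega>) \<in> borel_measurable M" for n by (rule xi_meas)
  have Tev: "T \<in> events" unfolding T_def by measurable
  obtain J \<delta> where \<delta>: "\<delta> > 0" and J: "\<And>j x. j \<ge> J \<Longrightarrow> (\<forall>i\<ge>1. x i = 1 \<or> x i = -1) \<Longrightarrow>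
      (\<Sum>i\<in>{1..nseq j}. x i) \<ge> real (rr j) \<Longrightarrow>
      esym x d (nseq j) / (real (nseq j) * ln (ln (real (nseq j) + 3))) powr (real d / 2) \<ge> \<delta>"
    using det[of d] by blast
  have AE: "AE \<omega> in M. \<omega> \<in> (\<Inter>K. \<Union>j\<in>{K..}. Eset j) \<longrightarrow> \<omega> \<in> T"
    using AE_good
  proof eventually_elim
    fix \<omega> assume g: "\<forall>i. i \<ge> 1 \<longrightarrow> eps i \<omega> \<in> {-1,1}"
    show "\<omega> \<in> (\<Inter>K. \<Union>j\<in>{K..}. Eset j) \<longrightarrow> \<omega> \<in> T"
    proof
      assume L: "\<omega> \<in> (\<Inter>K. \<Union>j\<in>{K..}. Eset j)"
      have om: "\<omega> \<in> space M" using L unfolding Eset_def by auto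
      have pm: "\<forall>i\<ge>1. eps i \<omega> = 1 \<or> eps i \<omega> = -1" using g by auto
      have fr: "\<exists>n\<ge>N. ereal \<delta> \<le> ereal (xi eps d n \<omega> / (real n * ln (ln (real n + 3))) powr (real d / 2))" for N
      proof -
        obtain j where j: "j \<ge> max J N" "\<omega> \<in> Eset j" using L by blast
        have "Sn (nseq j) \<omega> \<ge> real (rr j)" using j unfolding Eset_def by auto
        then have "\<delta> \<le> esym (\<lambda>i. eps i \<omega>) d (nseq j) / (real (nseq j) * ln (ln (real (nseq j) + 3))) powr (real d / 2)"
          using J[of j "\<lambda>i. eps i \<omega>"] j pm unfolding Sn_def by auto
        moreover have "esym (\<lambda>i. eps i \<omega>) d (nseq j) = xi eps d (nseq j) \<omega>" unfolding esym_def xi_def by simp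
        moreover have "nseq j \<ge> N" using j nseq_ge[of j] by auto
        ultimately show ?thesis by auto
      qed
      have "ereal \<delta> \<le> limsup (\<lambda>n. ereal (xi eps d n \<omega> / (real n * ln (ln (real n + 3))) powr (real d / 2)))"
        by (rule limsup_ge) (use fr in blast)
      then show "\<omega> \<in> T" unfolding T_def using om \<delta> by (auto intro: less_le_trans[of 0 "ereal \<delta>"])
    qed
  qed
  have "prob (\<Inter>K. \<Union>j\<in>{K..}. Eset j) \<le> prob T" by (rule finite_measure_mono_AE[OF AE Tev])
  then show ?thesis using prob_Lset unfolding T_def by linarith
qed

end


theorem mainTheorem9:
  fixes M :: "'a measure" and eps :: "nat \<Rightarrow> 'a \<Rightarrow> real" and d :: nat
  assumes "prob_space M"
    and "prob_space.indep_vars M (\<lambda>_. borel) eps {1..}"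
    and "\<And>i. i \<ge> 1 \<Longrightarrow> measure M {\<omega> \<in> space M. eps i \<omega> = 1} = 1/2"
    and "\<And>i. i \<ge> 1 \<Longrightarrow> measure M {\<omega> \<in> space M. eps i \<omega> = -1} = 1/2"
    and "d \<ge> 1"
  shows "measure M {\<omega> \<in> space M.
           limsup (\<lambda>n. ereal (xi eps d n \<omega> /
              (real n * ln (ln (real n + 3))) powr (real d / 2))) > 0} > 0"
proof -
  interpret r: rad M eps
    using assms(1-4) by (simp add: rad_def rad_axioms_def)
  show ?thesis by (rule r.main)
qed

end
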